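(* Let $\hat g_{\ell,1},\hat g_{\ell,2}>0$ with $\hat g_{\ell,1}>\hat g_{\ell,2}$, let $\rho_\ell>0$, and let $R_{\rm sum}$ be a positive integer. Let $x^\star_\ell$ be the minimizer over $x\ge0$ of $\hat p_\ell(x)=\frac{(k_\ell+x)\hat g_{\ell,2}}{x+1}\exp\!\big(-\frac{x}{(x+1)^2}\beta_\ell\big)$, where $k_\ell=\hat g_{\ell,1}/\hat g_{\ell,2}$ and $\beta_\ell=R_{\rm sum}\rho_\ell$ (with $x^\star_\ell=\infty$ allowed). Define the beam allocation $$(r^\star_{\ell,1},r^\star_{\ell,2})=\begin{cases}\Big(\Big\lfloor\dfrac{R_{\rm sum}}{x^\star_\ell+1}\Big\rfloor,\Big\lfloor\dfrac{x^\star_\ell R_{\rm sum}}{x^\star_\ell+1}\Big\rfloor\Big), & \text{if } \dfrac{R_{\rm sum}}{x^\star_\ell+1}>1,\\[2mm] (1,R_{\rm sum}-1), & \text{if } \dfrac{R_{\rm sum}}{x^\star_\ell+1}\le 1.\end{cases}$$ Then $r^\star_{\ell,1}\le r^\star_{\ell,2}$.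
   Context: Setting: beam alignment with two beam candidates with prior probabilities $\hat g_{\ell,1},\hat g_{\ell,2}$ of being the optimal beam, repeated $r_{\ell,1},r_{\ell,2}$ times with $r_{\ell,1}+r_{\ell,2}\le R_{\rm sum}$, chosen to minimize the miss-determination bound $\frac{r_{\ell,1}\hat g_{\ell,1}+r_{\ell,2}\hat g_{\ell,2}}{R_{\rm sum}}\exp(-\frac{r_{\ell,1}r_{\ell,2}}{R_{\rm sum}}\rho_\ell)$; the displayed rounded allocation derived from the relaxed optimal ratio $x^\star_\ell=r_{\ell,2}/r_{\ell,1}$ is the paper's solution of this problem. It is known (Theorem 1 of the paper) that $x^\star_\ell>1$ when $\hat g_{\ell,1}>\hat g_{\ell,2}$. *)

theory Defs
  imports "HOL-Analysis.Analysis"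
begin

definition p_hat :: "real \<Rightarrow> real \<Rightarrow> real \<Rightarrow> real \<Rightarrow> real" where
  "p_hat g1 g2 \<beta> x = (g1 / g2 + x) * g2 / (x + 1) * exp (- (x / (x + 1)^2) * \<beta>)"

definition is_ext_minimizer :: "(real \<Rightarrow> real) \<Rightarrow> ereal \<Rightarrow> bool" where
  "is_ext_minimizer f xs \<longleftrightarrow>
     (case xs of
        ereal x \<Rightarrow> x \<ge> 0 \<and> (\<forall>y\<ge>0. f x \<le> f y)
      | PInfty \<Rightarrow> (\<forall>x\<ge>0. \<exists>y\<ge>0. f y < f x) \<and> (f \<longlongrightarrow> (INF y\<in>{0..}. f y)) at_top
      | MInfty \<Rightarrow> False)"

text \<open>Rounded beam allocation (r1, r2) from the ratio xs; for xs = infinity,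
  R/(xs+1) = 0 \<le> 1, so the second branch applies.\<close>
definition beam_alloc :: "nat \<Rightarrow> ereal \<Rightarrow> nat \<times> nat" where
  "beam_alloc R xs =
     (case xs of
        ereal x \<Rightarrow> (if real R / (x + 1) > 1
                    then (nat \<lfloor>real R / (x + 1)\<rfloor>, nat \<lfloor>x * real R / (x + 1)\<rfloor>)
                    else (1, R - 1))
      | _ \<Rightarrow> (1, R - 1))"

end

theory Submission
  imports Defs
begin

lemma p_hat_alt: "g2 > 0 \<Longrightarrow> p_hat g1 g2 b x = (g1 + x * g2) / (x + 1) * exp (- (x / (x + 1)^2) * b)"
proof -
  assume "g2 > 0"
  hence "(g1 / g2 + x) * g2 = g1 + x * g2" by (simp add: field_simps)
  thus ?thesis unfolding p_hat_def by simp
qed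

lemma better:
  assumes "g1 > g2" "g2 > 0" "b > 0" "0 \<le> x" "x < 1"
  shows "\<exists>y\<ge>0. p_hat g1 g2 b y < p_hat g1 g2 b x"
proof (cases "x = 0")
  case True
  have e: "exp (- (1 / (1 + 1)^2) * b) \<le> 1" using assms by simp
  have "p_hat g1 g2 b 1 = (g1 + g2) / 2 * exp (- (1 / (1 + 1)^2) * b)"
    using assms by (simp add: p_hat_alt)
  also have "\<dots> \<le> (g1 + g2) / 2" using e assms
    by (intro mult_left_le) auto
  also have "\<dots> < p_hat g1 g2 b x" using True assms by (simp add: p_hat_alt)
  finally show ?thesis by (intro exI[of _ 1]) simp
next
  case False
  hence xp: "x > 0" using assms by simp
  have q: "(1/x) / (1/x + 1)^2 = x / (x + 1)^2" using xp
    by (simp add: field_simps power2_eq_square)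
  have f: "(g1 + (1/x) * g2) / (1/x + 1) = (g1 * x + g2) / (x + 1)"
  proof -
    have a: "g1 + (1/x) * g2 = (g1 * x + g2) / x" using xp by (simp add: field_simps)
    have b: "1/x + 1 = (x + 1) / x" using xp by (simp add: field_simps)
    show ?thesis unfolding a b using xp by simp
  qed
  have lt: "(g1 * x + g2) / (x + 1) < (g1 + x * g2) / (x + 1)"
  proof -
    have "(g1 - g2) * (1 - x) > 0" using assms by simp
    hence "g1 * x + g2 < g1 + x * g2" by (simp add: algebra_simps)
    thus ?thesis using xp by (simp add: divide_strict_right_mono)
  qed
  have "p_hat g1 g2 b (1/x) = (g1 * x + g2) / (x + 1) * exp (- (x / (x + 1)^2) * b)"
    using assms by (simp only: p_hat_alt q f)
  also have "\<dots> < (g1 + x * g2) / (x + 1) * exp (- (x / (x + 1)^2) * b)"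
    using lt by (intro mult_strict_right_mono) auto
  also have "\<dots> = p_hat g1 g2 b x" using assms by (simp add: p_hat_alt)
  finally show ?thesis using xp by (intro exI[of _ "1/x"]) simp
qed

theorem corollary1:
  fixes g1 g2 \<rho> :: real and R :: nat and xs :: ereal
  assumes "g1 > 0" and "g2 > 0" and "g1 > g2" and "\<rho> > 0"
    and "R \<ge> 2"
    and "is_ext_minimizer (p_hat g1 g2 (real R * \<rho>)) xs"
  shows "fst (beam_alloc R xs) \<le> snd (beam_alloc R xs)"
proof (cases xs)
  case (real x)
  have m: "x \<ge> 0" "\<forall>y\<ge>0. p_hat g1 g2 (real R * \<rho>) x \<le> p_hat g1 g2 (real R * \<rho>) y"
    using assms(6) real by (auto simp: is_ext_minimizer_def)
  have x1: "x \<ge> 1"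
  proof (rule ccontr)
    assume "\<not> x \<ge> 1"
    then obtain y where "y \<ge> 0" "p_hat g1 g2 (real R * \<rho>) y < p_hat g1 g2 (real R * \<rho>) x"
      using better[of g2 g1 "real R * \<rho>" x] assms m by auto
    thus False using m by force
  qed
  have "real R / (x + 1) \<le> x * real R / (x + 1)" using x1
    by (intro divide_right_mono) (auto simp: mult_right_mono[of 1 x "real R", simplified])
  hence "nat \<lfloor>real R / (x + 1)\<rfloor> \<le> nat \<lfloor>x * real R / (x + 1)\<rfloor>"
    by (intro nat_mono floor_mono)
  thus ?thesis using real assms(5) by (auto simp: beam_alloc_def)
qed (use assms in \<open>auto simp: beam_alloc_def\<close>)

end
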